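(* Let $\mathcal{G}=(\mathcal{V},\mathcal{A})$ be the information-flow graph of a single-sender single-uniprior index-coding instance with message lengths $q_1,\dots,q_n$. Then \[ \ell^*(\mathcal{G}) \leq \sum_{k \in \mathcal{V}} q_k - \sum_{i \in \mathcal{L}(\mathcal{G})} q_i - \sum_{\mathcal{V}_{S} \in \mathbb{V}} \min_{a \in \mathcal{V}_{S}} q_a, \] where $\mathbb{V}$ is the set of vertex sets of all leaf SCCs of $\mathcal{G}$.
   Context: Single-sender single-uniprior index coding: there are $n$ receivers and $n$ independent messages $x_1,\dots,x_n$; message $x_i$ consists of $q_i\ge 1$ bits, each independently uniformly distributed on $\{0,1\}$. A single sender knows all messages. Receiver $i$ knows $x_i$ a priori and requests a set $\mathcal{W}_i$ of messages with $x_i\notin\mathcal{W}_i$. The information-flow graph is the directed graph $\mathcal{G}=(\mathcal{V},\mathcal{A})$ with $\mathcal{V}=\{1,\dots,n\}$ and an arc $(j\to i)\in\mathcal{A}$ iff $x_j\in\mathcal{W}_i$. An index code of length $\ell$ consists of an encoding function $E:\{0,1\}^{\sum_i q_i}\to\{0,1\}^\ell$ and, for each receiver $i$, a decoding function $D_i$ such that $D_i(E(x_1,\dots,x_n),x_i)$ equals the tuple of messages in $\mathcal{W}_i$ for all values of the messages. $\ell^*(\mathcal{G})$ denotes the minimum length of an index code. A leaf vertex is a vertex with no outgoing arcs; $\mathcal{L}(\mathcal{G})$ is the set of leaf vertices. A strongly connected component (SCC) is a maximal subgraph in which every ordered pair of vertices is joined by a directed path inside the subgraph. A leaf SCC is an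 SCC with at least two vertices from which no arc goes to a vertex outside the SCC. *)

theory Defs
  imports Main
begin

text \<open>Vertices are 1..n. An arc (j, i) means message x_j is requested by receiver i.
  A message assignment gives each vertex i a bit string of length q i.\<close>

definition msgs :: "nat \<Rightarrow> (nat \<Rightarrow> nat) \<Rightarrow> (nat \<Rightarrow> bool list) set" where
  "msgs n q = {x. (\<forall>i\<in>{1..n}. length (x i) = q i) \<and> (\<forall>i. i \<notin> {1..n} \<longrightarrow> x i = [])}"

definition is_index_code ::
  "nat \<Rightarrow> (nat \<times> nat) set \<Rightarrow> (nat \<Rightarrow> nat) \<Rightarrow> nat \<Rightarrow>
   ((nat \<Rightarrow> bool list) \<Rightarrow> bool list) \<Rightarrow> (nat \<Rightarrow> bool list \<Rightarrow> bool list \<Rightarrow> nat \<Rightarrow> bool list) \<Rightarrow> bool" where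
  "is_index_code n A q l E D \<longleftrightarrow>
     (\<forall>x\<in>msgs n q. length (E x) = l) \<and>
     (\<forall>x\<in>msgs n q. \<forall>i\<in>{1..n}. \<forall>j. (j, i) \<in> A \<longrightarrow> D i (E x) (x i) j = x j)"

definition has_index_code :: "nat \<Rightarrow> (nat \<times> nat) set \<Rightarrow> (nat \<Rightarrow> nat) \<Rightarrow> nat \<Rightarrow> bool" where
  "has_index_code n A q l \<longleftrightarrow> (\<exists>E D. is_index_code n A q l E D)"

definition opt_len :: "nat \<Rightarrow> (nat \<times> nat) set \<Rightarrow> (nat \<Rightarrow> nat) \<Rightarrow> nat" where
  "opt_len n A q = (LEAST l. has_index_code n A q l)"

definition leaf_vertices :: "nat \<Rightarrow> (nat \<times> nat) set \<Rightarrow> nat set" where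
  "leaf_vertices n A = {i \<in> {1..n}. \<not> (\<exists>k. (i, k) \<in> A)}"

definition strongly_connected_in :: "(nat \<times> nat) set \<Rightarrow> nat set \<Rightarrow> bool" where
  "strongly_connected_in A S \<longleftrightarrow> (\<forall>u\<in>S. \<forall>v\<in>S. (u, v) \<in> (A \<inter> (S \<times> S))\<^sup>*)"

definition is_scc :: "nat \<Rightarrow> (nat \<times> nat) set \<Rightarrow> nat set \<Rightarrow> bool" where
  "is_scc n A S \<longleftrightarrow> S \<noteq> {} \<and> S \<subseteq> {1..n} \<and> strongly_connected_in A S \<and>
     (\<forall>T. S \<subseteq> T \<and> T \<subseteq> {1..n} \<and> strongly_connected_in A T \<longrightarrow> T = S)"

definition is_leaf_scc :: "nat \<Rightarrow> (nat \<times> nat) set \<Rightarrow> nat set \<Rightarrow> bool" where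
  "is_leaf_scc n A S \<longleftrightarrow> is_scc n A S \<and> card S \<ge> 2 \<and> (\<forall>u\<in>S. \<forall>w. (u, w) \<in> A \<longrightarrow> w \<in> S)"

end

theory Submission
  imports Defs
begin

definition xorp :: "bool list \<Rightarrow> bool list \<Rightarrow> bool list" where
  "xorp u v = map2 (\<noteq>) u (v @ replicate (length u) False)"

lemma length_xorp[simp]: "length (xorp u v) = length u"
  by (simp add: xorp_def)

lemma nth_xorp: "i < length u \<Longrightarrow> xorp u v ! i = (u!i \<noteq> (v @ replicate (length u) False) ! i)"
  by (simp add: xorp_def)

lemma xorp_xorp: "xorp (xorp u v) v = u"
  by (rule nth_equalityI) (auto simp: nth_xorp)

lemma xorp_inj:
  assumes "length v = length v'" "length v \<le> length u" "xorp u v = xorp u v'"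
  shows "v = v'"
proof (rule nth_equalityI)
  show "length v = length v'" by fact
  fix i assume i: "i < length v"
  have "xorp u v ! i = xorp u v' ! i" using assms(3) by simp
  then show "v ! i = v' ! i" using i assms(1,2)
    by (auto simp: nth_xorp nth_append)
qed

lemma concat_inj: "map length xs = map length ys \<Longrightarrow> concat xs = concat ys \<Longrightarrow> xs = ys"
proof (induction xs arbitrary: ys)
  case Nil then show ?case by simp
next
  case (Cons a xs)
  then obtain b ys' where ys: "ys = b # ys'" by (cases ys) auto
  with Cons.prems have l: "length a = length b" "map length xs = map length ys'" by auto
  with Cons.prems ys have "a = b" "concat xs = concat ys'" by (auto simp: append_eq_append_conv)
  with Cons.IH l ys show ?case by auto
qed

lemma scc_disj:
  assumes "is_scc n A S" "is_scc n A T" "S \<inter> T \<noteq> {}"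
  shows "S = T"
proof -
  obtain v where v: "v \<in> S" "v \<in> T" using assms(3) by auto
  let ?B = "A \<inter> ((S \<union> T) \<times> (S \<union> T))"
  have mS: "(A \<inter> (S \<times> S))\<^sup>* \<subseteq> ?B\<^sup>*"
    by (rule rtrancl_mono) auto
  have mT: "(A \<inter> (T \<times> T))\<^sup>* \<subseteq> ?B\<^sup>*"
    by (rule rtrancl_mono) auto
  have scS: "\<forall>u\<in>S. \<forall>w\<in>S. (u, w) \<in> (A \<inter> (S \<times> S))\<^sup>*"
    using assms(1) by (simp add: is_scc_def strongly_connected_in_def)
  have scT: "\<forall>u\<in>T. \<forall>w\<in>T. (u, w) \<in> (A \<inter> (T \<times> T))\<^sup>*"
    using assms(2) by (simp add: is_scc_def strongly_connected_in_def)
  have to: "(u, v) \<in> ?B\<^sup>*" if u: "u \<in> S \<union> T" for u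
  proof (cases "u \<in> S")
    case True then show ?thesis using scS v mS by blast
  next
    case False then have "u \<in> T" using u by simp
    then show ?thesis using scT v mT by blast
  qed
  have fr: "(v, w) \<in> ?B\<^sup>*" if w: "w \<in> S \<union> T" for w
  proof (cases "w \<in> S")
    case True then show ?thesis using scS v mS by blast
  next
    case False then have "w \<in> T" using w by simp
    then show ?thesis using scT v mT by blast
  qed
  have sc: "strongly_connected_in A (S \<union> T)"
    unfolding strongly_connected_in_def using to fr by (meson rtrancl_trans)
  have sub: "S \<union> T \<subseteq> {1..n}" using assms by (simp add: is_scc_def)
  have m1: "\<forall>U. S \<subseteq> U \<and> U \<subseteq> {1..n} \<and> strongly_connected_in A U \<longrightarrow> U = S"
    using assms(1) by (simp add: is_scc_def)
  have m2: "\<forall>U. T \<subseteq> U \<and> U \<subseteq> {1..n} \<and> strongly_connected_in A U \<longrightarrow> U = T"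
    using assms(2) by (simp add: is_scc_def)
  have "S \<union> T = S" using m1 sc sub by blast
  moreover have "S \<union> T = T" using m2 sc sub by blast
  ultimately show ?thesis by simp
qed
lemma leaf_scc_out:
  assumes "is_leaf_scc n A S" "u \<in> S"
  shows "\<exists>w. (u, w) \<in> A"
proof -
  have fin: "finite S" using assms by (auto simp: is_leaf_scc_def is_scc_def intro: finite_subset)
  have "S - {u} \<noteq> {}"
  proof
    assume "S - {u} = {}"
    then have "S \<subseteq> {u}" by auto
    then have "card S \<le> 1" using card_mono[of "{u}" S] by auto
    then show False using assms by (auto simp: is_leaf_scc_def)
  qed
  then obtain w where w: "w \<in> S" "w \<noteq> u" by auto
  then have "(u, w) \<in> (A \<inter> (S \<times> S))\<^sup>*"
    using assms by (auto simp: is_leaf_scc_def is_scc_def strongly_connected_in_def)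
  then show ?thesis using w(2)
    by (cases rule: converse_rtranclE) auto
qed

theorem theorem2:
  fixes n :: nat and A :: "(nat \<times> nat) set" and q :: "nat \<Rightarrow> nat"
  assumes "A \<subseteq> {1..n} \<times> {1..n}"
    and "\<forall>i. (i, i) \<notin> A"
    and "\<forall>i\<in>{1..n}. q i \<ge> 1"
  shows "int (opt_len n A q) \<le>
           (\<Sum>k\<in>{1..n}. int (q k)) - (\<Sum>i\<in>leaf_vertices n A. int (q i))
           - (\<Sum>S\<in>{S. is_leaf_scc n A S}. int (Min (q ` S)))"
proof -
  define LS where "LS = {S. is_leaf_scc n A S}"
  define L where "L = leaf_vertices n A"
  define U where "U = \<Union>LS"
  define R where "R = {1..n} - L - U"
  define a where "a S = (SOME a. a \<in> S \<and> q a = Min (q ` S))" for S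
  define sc where "sc k = (THE S. S \<in> LS \<and> k \<in> S)" for k
  define T where "T = R \<union> (\<Union>S\<in>LS. S - {a S})"
  define f where "f k x = (if k \<in> U then xorp (x k) (x (a (sc k))) else x k)"
    for k and x :: "nat \<Rightarrow> bool list"
  define E where "E x = concat (map (\<lambda>k. f k x) (sorted_list_of_set T))"
    for x :: "nat \<Rightarrow> bool list"
  define D where "D i c xi j = (SOME x'. x' \<in> msgs n q \<and> E x' = c \<and> x' i = xi) j"
    for i :: nat and c xi and j :: nat
  have LSsub: "S \<subseteq> {1..n}" if "S \<in> LS" for S
    using that by (auto simp: LS_def is_leaf_scc_def is_scc_def)
  have finLS: "finite LS" using LSsub by (intro finite_subset[of LS "Pow {1..n}"]) auto
  have finS: "finite S" if "S \<in> LS" for S using LSsub[OF that] finite_subset by blast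
  have neS: "S \<noteq> {}" if "S \<in> LS" for S using that by (auto simp: LS_def is_leaf_scc_def is_scc_def)
  have aprop: "a S \<in> S \<and> q (a S) = Min (q ` S)" if "S \<in> LS" for S
  proof -
    have "Min (q ` S) \<in> q ` S" using finS[OF that] neS[OF that] by (intro Min_in) auto
    then have "\<exists>a. a \<in> S \<and> q a = Min (q ` S)" by force
    then show ?thesis unfolding a_def by (rule someI_ex)
  qed
  have amin: "q (a S) \<le> q k" if "S \<in> LS" "k \<in> S" for S k
    using aprop[OF that(1)] finS[OF that(1)] that(2) by simp
  have disj: "S = S'" if "S \<in> LS" "S' \<in> LS" "k \<in> S" "k \<in> S'" for S S' k
    using that scc_disj[of n A S S'] by (auto simp: LS_def is_leaf_scc_def)
  have scS: "sc k = S" if "S \<in> LS" "k \<in> S" for S k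
    unfolding sc_def using that disj by (intro the_equality) auto
  have closed: "w \<in> S" if "S \<in> LS" "u \<in> S" "(u, w) \<in> A" for S u w
    using that by (auto simp: LS_def is_leaf_scc_def)
  have LU: "L \<inter> U = {}"
    using leaf_scc_out[of n A] by (auto simp: L_def U_def LS_def leaf_vertices_def)
  have Tsub: "T \<subseteq> {1..n}" using LSsub by (auto simp: T_def R_def)
  have finT: "finite T" using Tsub finite_subset by blast
  have lenf: "length (f k x) = q k" if "x \<in> msgs n q" "k \<in> {1..n}" for k x
  proof (cases "k \<in> U")
    case True
    then obtain S where "S \<in> LS" "k \<in> S" by (auto simp: U_def)
    then show ?thesis using True that by (simp add: f_def msgs_def)
  next
    case False then show ?thesis using that by (simp add: f_def msgs_def)
  qed
  have mapl: "map length (map (\<lambda>k. f k x) (sorted_list_of_set T)) = map q (sorted_list_of_set T)"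
    if "x \<in> msgs n q" for x
    using lenf[OF that] Tsub finT by auto
  have lenE: "length (E x) = sum q T" if "x \<in> msgs n q" for x
  proof -
    have "length (E x) = sum_list (map q (sorted_list_of_set T))"
      unfolding E_def length_concat using mapl[OF that] by (metis map_map)
    also have "\<dots> = sum q T" using finT by (simp add: sum_list_distinct_conv_sum_set)
    finally show ?thesis .
  qed
  have key: "x j = x' j" if x: "x \<in> msgs n q" and x': "x' \<in> msgs n q" and Eq: "E x = E x'"
    and ii: "x i = x' i" and ji: "(j, i) \<in> A" for x x' i j
  proof -
    have "map (\<lambda>k. f k x) (sorted_list_of_set T) = map (\<lambda>k. f k x') (sorted_list_of_set T)"
      using concat_inj[OF _ Eq[unfolded E_def]] mapl[OF x] mapl[OF x'] by simp
    then have fe: "f k x = f k x'" if "k \<in> T" for k using that finT by (simp add: map_eq_conv)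
    have jn: "j \<in> {1..n}" and inn: "i \<in> {1..n}" using ji assms(1) by auto
    have jL: "j \<notin> L" using ji by (auto simp: L_def leaf_vertices_def)
    show ?thesis
    proof (cases "j \<in> U")
      case False
      then have "j \<in> T" using jn jL by (auto simp: T_def R_def)
      then show ?thesis using fe[of j] False by (simp add: f_def)
    next
      case True
      then obtain S where S: "S \<in> LS" "j \<in> S" by (auto simp: U_def)
      have iS: "i \<in> S" using closed[OF S ji] .
      have aS: "a S \<in> S" using aprop[OF S(1)] by simp
      have aeq: "x (a S) = x' (a S)"
      proof (cases "i = a S")
        case True then show ?thesis using ii by simp
      next
        case False
        then have "i \<in> T" using S(1) iS by (auto simp: T_def)
        then have "xorp (x i) (x (a S)) = xorp (x i) (x' (a S))"
        proof -
          have iU: "i \<in> U" using S(1) iS by (auto simp: U_def)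
          have "f i x = f i x'" using fe \<open>i \<in> T\<close> by blast
          then show ?thesis using iU ii scS[OF S(1) iS] by (simp add: f_def)
        qed
        moreover have "length (x (a S)) = q (a S)" "length (x' (a S)) = q (a S)"
          "length (x i) = q i"
          using x x' aS LSsub[OF S(1)] inn by (auto simp: msgs_def)
        ultimately show ?thesis using xorp_inj amin[OF S(1) iS] by metis
      qed
      show ?thesis
      proof (cases "j = a S")
        case True then show ?thesis using aeq by simp
      next
        case False
        then have "j \<in> T" using S by (auto simp: T_def)
        then have "xorp (x j) (x (a S)) = xorp (x' j) (x' (a S))"
          using fe[of j] scS[OF S] S True by (auto simp: f_def)
        then have "xorp (xorp (x j) (x (a S))) (x (a S)) = xorp (xorp (x' j) (x' (a S))) (x' (a S))"
          using aeq by simp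
        then show ?thesis by (simp add: xorp_xorp)
      qed
    qed
  qed
  have code: "is_index_code n A q (sum q T) E D"
    unfolding is_index_code_def
  proof (intro conjI ballI allI impI)
    fix x assume "x \<in> msgs n q" then show "length (E x) = sum q T" by (rule lenE)
  next
    fix x i j assume x: "x \<in> msgs n q" and i: "i \<in> {1..n}" and ji: "(j, i) \<in> A"
    define x' where "x' = (SOME x'. x' \<in> msgs n q \<and> E x' = E x \<and> x' i = x i)"
    have "\<exists>y. y \<in> msgs n q \<and> E y = E x \<and> y i = x i" using x by blast
    then have "x' \<in> msgs n q \<and> E x' = E x \<and> x' i = x i"
      unfolding x'_def by (rule someI_ex)
    then have x'm: "x' \<in> msgs n q" and e: "E x' = E x" and xi: "x' i = x i" by auto
    have "x' j = x j" by (rule key[OF x'm x e xi ji])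
    then show "D i (E x) (x i) j = x j" unfolding D_def x'_def[symmetric] .
  qed
  then have hc: "has_index_code n A q (sum q T)" unfolding has_index_code_def by blast
  have "opt_len n A q \<le> sum q T"
    unfolding opt_len_def by (rule Least_le) (rule hc)
  have pd: "pairwise disjnt LS" using disj by (auto simp: pairwise_def disjnt_def)
  have sumU: "sum q U = (\<Sum>S\<in>LS. sum q S)"
  proof -
    have "sum q (\<Union>LS) = (sum \<circ> sum) q LS"
      by (rule sum.Union_disjoint) (use finS disj in blast)+
    then show ?thesis by (simp add: U_def)
  qed
  have sumS: "sum q S = sum q (S - {a S}) + Min (q ` S)" if "S \<in> LS" for S
    using aprop[OF that] finS[OF that] sum.remove[of S "a S" q] by simp
  have sumT2: "sum q (\<Union>S\<in>LS. S - {a S}) = (\<Sum>S\<in>LS. sum q (S - {a S}))"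
    using finLS finS disj by (intro sum.UNION_disjoint) auto
  have sumT: "sum q T = sum q R + (\<Sum>S\<in>LS. sum q (S - {a S}))"
  proof -
    have "R \<inter> (\<Union>S\<in>LS. S - {a S}) = {}" by (auto simp: R_def U_def)
    moreover have "finite R" "finite (\<Union>S\<in>LS. S - {a S})" using finT by (auto simp: T_def)
    ultimately show ?thesis unfolding T_def using sumT2 by (simp add: sum.union_disjoint)
  qed
  have Lsub: "L \<subseteq> {1..n}" by (auto simp: L_def leaf_vertices_def)
  have Usub: "U \<subseteq> {1..n}" using LSsub by (auto simp: U_def)
  have "{1..n} = R \<union> (L \<union> U)" using Lsub Usub by (auto simp: R_def)
  moreover have "R \<inter> (L \<union> U) = {}" by (auto simp: R_def)
  ultimately have "sum q {1..n} = sum q R + sum q (L \<union> U)"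
    by (metis finite_atLeastAtMost finite_Un sum.union_disjoint)
  also have "sum q (L \<union> U) = sum q L + sum q U"
  proof -
    have "finite L" using Lsub by (rule finite_subset) simp
    moreover have "finite U" using Usub by (rule finite_subset) simp
    ultimately show ?thesis using LU by (intro sum.union_disjoint)
  qed
  finally have tot: "sum q {1..n} = sum q T + sum q L + (\<Sum>S\<in>LS. Min (q ` S))"
    using sumU sumT sumS by (simp add: sum.distrib)
  have "int (sum q {1..n}) = int (sum q T) + int (sum q L) + int (\<Sum>S\<in>LS. Min (q ` S))"
    using tot by simp
  moreover have "int (opt_len n A q) \<le> int (sum q T)" using \<open>opt_len n A q \<le> sum q T\<close> by (simp only: of_nat_le_iff)
  ultimately show ?thesis by (simp add: LS_def L_def of_nat_sum)
qed

end
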